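(* Let $\Lambda$ be the $K3^{[n]}$-lattice ($n\ge2$), $\alpha\in\Lambda$ primitive isotropic, $Q_\alpha:=\alpha^\perp/\mathbb{Z}\alpha$, and let $Q_\alpha$ act on $\Omega_{\alpha^\perp}$ by $[z]\cdot\mathbb{C}x:=\mathbb{C}(x+(x,z)\alpha)$ for $x\in\alpha^\perp\otimes\mathbb{C}$ (denote the image group of this action by $g(Q_\alpha)$). For $\underline{\ell}\in\Omega_{Q_\alpha}$: (1) $g(Q_\alpha)$ has a dense orbit in the fiber $q^{-1}(\underline{\ell})$ if and only if $\underline{\ell}$ is non-special; (2) if $g(Q_\alpha)$ has a dense orbit in $q^{-1}(\underline{\ell})$, then every $g(Q_\alpha)$-orbit in $q^{-1}(\underline{\ell})$ is dense.
   Context: $\Omega_{\alpha^\perp}:=\{\ell\in\mathbb{P}(\Lambda\otimes\mathbb{C}):(\ell,\ell)=0,(\ell,\bar\ell)>0,(\ell,\alpha)=0\}$, $\Omega_{Q_\alpha}:=\{\ell\in\mathbb{P}(Q_\alpha\otimes\mathbb{C}):(\ell,\ell)=0,(\ell,\bar\ell)>0\}$, and $q:\Omega_{\alpha^\perp}\to\Omega_{Q_\alpha}$ sends a line to its image modulo $\mathbb{C}\alpha$; the fiber over $\underline{\ell}$ is $\mathbb{P}(\mathbb{C}\alpha+\mathbb{C}t)\setminus\{[\alpha]\}$ for any lift $t$. A period $\underline{\ell}\in\Omega_{Q_\alpha}$ is special if $(\underline{\ell}\oplus\bar{\underline{\ell}})\cap Q_\alpha\neq0$ (equivalently, the corresponding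 $K3$ period in $\Lambda_{k3}\cong$ $K3$ lattice, via $Q_\alpha\cong\bar v^\perp\subset\Lambda_{k3}$, is special), and non-special otherwise. The action is well defined in $Q_\alpha$ since $(x,\alpha)=0$. *)

theory Defs
  imports "HOL-Analysis.Analysis"
begin

text \<open>Lambda = U^3 (+) E8(-1)^2 (+) <-2(n-1)>, rank 23. Vectors are integer
  (resp. complex) functions on nat supported on indices 0..22.
  Indices 0..5: three hyperbolic planes U; 6..13 and 14..21: two copies of E8(-1);
  22: the generator of <-2(n-1)>.\<close>

definition E8_adj :: "nat \<Rightarrow> nat \<Rightarrow> bool" where
  "E8_adj i j \<longleftrightarrow> {i, j} \<in> {{0,2},{2,3},{3,4},{4,5},{5,6},{6,7},{1,3}}"

definition E8m :: "nat \<Rightarrow> nat \<Rightarrow> int" where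
  "E8m i j = (if i = j then -2 else if E8_adj i j then 1 else 0)"

definition gram :: "nat \<Rightarrow> nat \<Rightarrow> nat \<Rightarrow> int" where
  "gram n i j =
     (if i < 6 \<and> j < 6 then (if i div 2 = j div 2 \<and> i \<noteq> j then 1 else 0)
      else if 6 \<le> i \<and> i < 14 \<and> 6 \<le> j \<and> j < 14 then E8m (i - 6) (j - 6)
      else if 14 \<le> i \<and> i < 22 \<and> 14 \<le> j \<and> j < 22 then E8m (i - 14) (j - 14)
      else if i = 22 \<and> j = 22 then - 2 * (int n - 1)
      else 0)"

definition Lam :: "(nat \<Rightarrow> int) set" where
  "Lam = {x. \<forall>i\<ge>23. x i = 0}"

definition bil :: "nat \<Rightarrow> (nat \<Rightarrow> int) \<Rightarrow> (nat \<Rightarrow> int) \<Rightarrow> int" where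
  "bil n x y = (\<Sum>i<23. \<Sum>j<23. gram n i j * x i * y j)"

definition primitive :: "(nat \<Rightarrow> int) \<Rightarrow> bool" where
  "primitive a \<longleftrightarrow> a \<in> Lam \<and>
     (\<forall>k b. b \<in> Lam \<and> a = (\<lambda>i. k * b i) \<longrightarrow> k = 1 \<or> k = -1)"

definition LamC :: "(nat \<Rightarrow> complex) set" where
  "LamC = {x. \<forall>i\<ge>23. x i = 0}"

definition ofintv :: "(nat \<Rightarrow> int) \<Rightarrow> nat \<Rightarrow> complex" where
  "ofintv x = (\<lambda>i. of_int (x i))"

definition cnjv :: "(nat \<Rightarrow> complex) \<Rightarrow> nat \<Rightarrow> complex" where
  "cnjv x = (\<lambda>i. cnj (x i))"

definition bilC :: "nat \<Rightarrow> (nat \<Rightarrow> complex) \<Rightarrow> (nat \<Rightarrow> complex) \<Rightarrow> complex" where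
  "bilC n x y = (\<Sum>i<23. \<Sum>j<23. of_int (gram n i j) * x i * y j)"

text \<open>Points of P(Lambda (x) C) are complex lines (1-dim subspaces, including 0).\<close>
definition cline :: "(nat \<Rightarrow> complex) \<Rightarrow> (nat \<Rightarrow> complex) set" where
  "cline x = {(\<lambda>i. c * x i) | c. True}"

definition Plines :: "(nat \<Rightarrow> complex) set set" where
  "Plines = {cline x | x. x \<in> LamC \<and> x \<noteq> (\<lambda>i. 0)}"

text \<open>Quotient topology on P(Lambda (x) C) induced from Lambda (x) C minus 0
  (the latter carrying the Euclidean = product topology).\<close>
definition PT :: "(nat \<Rightarrow> complex) set topology" where
  "PT = topology (\<lambda>U. U \<subseteq> Plines \<and>
          openin (top_of_set (LamC - {\<lambda>i. 0})) {x \<in> LamC - {\<lambda>i. 0}. cline x \<in> U})"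

definition Omega_perp :: "nat \<Rightarrow> (nat \<Rightarrow> int) \<Rightarrow> (nat \<Rightarrow> complex) set set" where
  "Omega_perp n a = {cline x | x. x \<in> LamC \<and> x \<noteq> (\<lambda>i. 0) \<and> bilC n x x = 0 \<and>
      Im (bilC n x (cnjv x)) = 0 \<and> Re (bilC n x (cnjv x)) > 0 \<and> bilC n x (ofintv a) = 0}"

text \<open>Points of P(Q_alpha (x) C) are represented by their preimages in alpha-perp (x) C,
  i.e. by planes  C alpha + C t  with t in alpha-perp, t not in C alpha.\<close>
definition plane :: "(nat \<Rightarrow> int) \<Rightarrow> (nat \<Rightarrow> complex) \<Rightarrow> (nat \<Rightarrow> complex) set" where
  "plane a t = {(\<lambda>i. c * ofintv a i + d * t i) | c d. True}"

definition Omega_Q :: "nat \<Rightarrow> (nat \<Rightarrow> int) \<Rightarrow> (nat \<Rightarrow> complex) set set" where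
  "Omega_Q n a = {plane a t | t. t \<in> LamC \<and> bilC n t (ofintv a) = 0 \<and>
      t \<notin> cline (ofintv a) \<and> bilC n t t = 0 \<and>
      Im (bilC n t (cnjv t)) = 0 \<and> Re (bilC n t (cnjv t)) > 0}"

text \<open>q: a line goes to its image modulo C alpha (represented by line + C alpha).\<close>
definition qmap :: "(nat \<Rightarrow> int) \<Rightarrow> (nat \<Rightarrow> complex) set \<Rightarrow> (nat \<Rightarrow> complex) set" where
  "qmap a L = {(\<lambda>i. y i + c * ofintv a i) | y c. y \<in> L}"

definition fiber :: "nat \<Rightarrow> (nat \<Rightarrow> int) \<Rightarrow> (nat \<Rightarrow> complex) set \<Rightarrow> (nat \<Rightarrow> complex) set set" where
  "fiber n a W = {L \<in> Omega_perp n a. qmap a L = W}"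

text \<open>Special periods: (l (+) conj l) meets Q_alpha nontrivially; in terms of preimages
  in alpha-perp (x) C: some z in alpha-perp of Lambda, z not in Z alpha, lies in W + conj W.\<close>
definition special :: "nat \<Rightarrow> (nat \<Rightarrow> int) \<Rightarrow> (nat \<Rightarrow> complex) set \<Rightarrow> bool" where
  "special n a W \<longleftrightarrow> (\<exists>z. z \<in> Lam \<and> bil n z a = 0 \<and> z \<notin> range (\<lambda>k::int. (\<lambda>i. k * a i)) \<and>
      (\<exists>u v. u \<in> W \<and> v \<in> W \<and> ofintv z = (\<lambda>i. u i + cnj (v i))))"

definition act :: "nat \<Rightarrow> (nat \<Rightarrow> int) \<Rightarrow> (nat \<Rightarrow> int) \<Rightarrow> (nat \<Rightarrow> complex) set \<Rightarrow> (nat \<Rightarrow> complex) set" where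
  "act n a z L = {(\<lambda>i. y i + bilC n y (ofintv z) * ofintv a i) | y. y \<in> L}"

definition gQ :: "nat \<Rightarrow> (nat \<Rightarrow> int) \<Rightarrow> ((nat \<Rightarrow> complex) set \<Rightarrow> (nat \<Rightarrow> complex) set) set" where
  "gQ n a = (\<lambda>z. act n a z) ` {z \<in> Lam. bil n z a = 0}"

definition orbit :: "nat \<Rightarrow> (nat \<Rightarrow> int) \<Rightarrow> (nat \<Rightarrow> complex) set \<Rightarrow> (nat \<Rightarrow> complex) set set" where
  "orbit n a L = {g L | g. g \<in> gQ n a}"

definition dense_in :: "(nat \<Rightarrow> complex) set set \<Rightarrow> (nat \<Rightarrow> complex) set set \<Rightarrow> bool" where
  "dense_in S F \<longleftrightarrow> S \<subseteq> F \<and> (subtopology PT F) closure_of S = F"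

definition has_dense_orbit :: "nat \<Rightarrow> (nat \<Rightarrow> int) \<Rightarrow> (nat \<Rightarrow> complex) set \<Rightarrow> bool" where
  "has_dense_orbit n a W \<longleftrightarrow> (\<exists>L \<in> fiber n a W. dense_in (orbit n a L) (fiber n a W))"

end

theory Submission
  imports Defs
begin


definition sgrp :: "'a::ab_group_add set \<Rightarrow> bool" where
  "sgrp S \<longleftrightarrow> 0 \<in> S \<and> (\<forall>x\<in>S. \<forall>y\<in>S. x + y \<in> S) \<and> (\<forall>x\<in>S. -x \<in> S)"

lemma sgrp_nat: assumes "sgrp (S::'a::comm_ring_1 set)" "x \<in> S" shows "of_nat m * x \<in> S"
proof (induction m)
  case 0 then show ?case using assms by (simp add: sgrp_def)
next
  case (Suc m)
  have "of_nat (Suc m) * x = of_nat m * x + x" by (simp add: algebra_simps)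
  then show ?case using Suc assms by (simp add: sgrp_def)
qed

lemma sgrp_int: assumes "sgrp (S::'a::comm_ring_1 set)" "x \<in> S" shows "of_int k * x \<in> S"
proof (cases "k \<ge> 0")
  case True
  then obtain m where "k = int m" by (metis nonneg_int_cases)
  then show ?thesis using sgrp_nat[OF assms] by simp
next
  case False
  then obtain m where "k = - int m" by (metis nonpos_int_cases linear)
  then have "of_int k * x = - (of_nat m * x)" by simp
  then show ?thesis using sgrp_nat[OF assms, of m] assms(1) by (simp add: sgrp_def)
qed

lemma sgrp_diff: "sgrp S \<Longrightarrow> x \<in> S \<Longrightarrow> y \<in> S \<Longrightarrow> x - y \<in> S"
  unfolding sgrp_def by (metis diff_conv_add_uminus)

lemma gap_lemma:
  fixes S :: "real set"
  assumes S: "sgrp S" and eta: "\<eta> > 0" and gap: "\<And>s. s \<in> S \<Longrightarrow> \<not> (0 < s \<and> s < \<eta>)"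
  shows "\<exists>a>0. \<forall>s\<in>S. s / a \<in> \<int>"
proof (cases "\<forall>s\<in>S. s = 0")
  case True then show ?thesis by (intro exI[of _ 1]) auto
next
  case False
  then obtain s0 where s0: "s0 \<in> S" "s0 \<noteq> 0" by auto
  define P where "P = {s\<in>S. s > 0}"
  have Pne: "P \<noteq> {}"
  proof (cases "s0 > 0")
    case True then show ?thesis using s0 by (auto simp: P_def)
  next
    case False then have "-s0 \<in> P" using s0 S by (auto simp: P_def sgrp_def)
    then show ?thesis by auto
  qed
  have bdd: "bdd_below P" unfolding bdd_below_def P_def by (intro exI[of _ 0]) auto
  define a where "a = Inf P"
  have Pge: "p \<ge> \<eta>" if "p \<in> P" for p using gap[of p] that by (auto simp: P_def)
  have aeta: "a \<ge> \<eta>" unfolding a_def by (rule cInf_greatest[OF Pne]) (use Pge in auto)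
  have aP: "a \<in> P"
  proof (rule ccontr)
    assume naP: "a \<notin> P"
    have "Inf P < a + \<eta>" using eta a_def by simp
    then obtain p1 where p1: "p1 \<in> P" "p1 < a + \<eta>" using cInf_less_iff[OF Pne bdd] by auto
    have "a \<le> p1" unfolding a_def using cInf_lower[OF p1(1) bdd] .
    with naP p1 have ap1: "a < p1" by (metis order_le_less)
    then have "Inf P < p1" by (simp add: a_def)
    then obtain p2 where p2: "p2 \<in> P" "p2 < p1" using cInf_less_iff[OF Pne bdd] by auto
    have "a \<le> p2" unfolding a_def using cInf_lower[OF p2(1) bdd] .
    have "p1 - p2 \<in> S" using p1 p2 S sgrp_diff by (auto simp: P_def)
    moreover have "0 < p1 - p2" "p1 - p2 < \<eta>" using p1 p2 \<open>a \<le> p2\<close> by auto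
    ultimately show False using gap by blast
  qed
  have apos: "a > 0" using aP by (auto simp: P_def)
  have "s / a \<in> \<int>" if s: "s \<in> S" for s
  proof -
    define k where "k = \<lfloor>s / a\<rfloor>"
    define r where "r = s - of_int k * a"
    have rS: "r \<in> S" unfolding r_def using sgrp_diff[OF S s sgrp_int[OF S, of a k]] aP
      by (auto simp: P_def)
    have "of_int k \<le> s / a" "s / a < of_int k + 1" unfolding k_def by linarith+
    then have r0: "0 \<le> r" "r < a" using apos unfolding r_def by (auto simp: field_simps)
    have "r = 0"
    proof (rule ccontr)
      assume "r \<noteq> 0"
      then have "r \<in> P" using r0 rS by (auto simp: P_def)
      then have "a \<le> r" unfolding a_def using cInf_lower[OF _ bdd] by auto
      then show False using r0 by auto
    qed
    then have "s / a = of_int k" using apos unfolding r_def by (auto simp: field_simps)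
    then show ?thesis by simp
  qed
  then show ?thesis using apos by blast
qed

lemma nogap_dense:
  fixes S :: "real set"
  assumes S: "sgrp S" and ng: "\<And>\<eta>. \<eta> > 0 \<Longrightarrow> \<exists>s\<in>S. 0 < s \<and> s < \<eta>" and e: "e > 0"
  shows "\<exists>s\<in>S. \<bar>s - x\<bar> < e"
proof -
  obtain s where s: "s \<in> S" "0 < s" "s < e" using ng[OF e] by auto
  define k where "k = \<lfloor>x / s\<rfloor>"
  have "of_int k \<le> x / s" "x / s < of_int k + 1" unfolding k_def by linarith+
  then have "0 \<le> x - of_int k * s" "x - of_int k * s < s" using s by (auto simp: field_simps)
  then show ?thesis using sgrp_int[OF S s(1), of k] s by (intro bexI[of _ "of_int k * s"]) auto
qed




lemma sgrp_image_lin: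
  assumes "sgrp H" and "\<And>x y. f (x + y) = f x + f y" and "\<And>x. f (-x) = - f x" and "f 0 = 0"
  shows "sgrp (f ` H)"
  using assms unfolding sgrp_def by (auto simp flip: assms(2,3))

lemma gap_mu:
  fixes H :: "complex set"
  assumes H: "sgrp H" and d: "d \<noteq> 0" and eta: "\<eta> > 0"
    and gap: "\<And>h. h \<in> H \<Longrightarrow> \<not> (0 < Im (h / d) \<and> Im (h / d) < \<eta>)"
  shows "\<exists>\<mu>. \<mu> \<noteq> 0 \<and> (\<forall>h\<in>H. Re (\<mu> * h) \<in> \<int>)"
proof -
  define S where "S = (\<lambda>h. Im (h / d)) ` H"
  have "sgrp S" unfolding S_def
    by (rule sgrp_image_lin[OF H]) (auto simp: add_divide_distrib)
  then obtain a where a: "a > 0" "\<forall>s\<in>S. s / a \<in> \<int>"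
    using gap_lemma[of S \<eta>] eta gap unfolding S_def by blast
  define \<mu> where "\<mu> = - \<i> / (of_real a * d)"
  have "\<mu> \<noteq> 0" using a d by (simp add: \<mu>_def)
  moreover have "Re (\<mu> * h) \<in> \<int>" if "h \<in> H" for h
  proof -
    have e1: "\<mu> * h = (- \<i> * (h / d)) / of_real a" by (simp add: \<mu>_def field_simps)
    have e0: "\<And>z. Re (- \<i> * z) = Im z" by simp
    have e2: "Re (- \<i> * (h / d)) = Im (h / d)" by (rule e0)
    have "Re (\<mu> * h) = Im (h / d) / a" unfolding e1 Re_divide_of_real e2 ..
    then show ?thesis using a that unfolding S_def by auto
  qed
  ultimately show ?thesis by blast
qed

lemma denseD:
  fixes H :: "complex set"
  assumes H: "sgrp H" and nd: "closure H \<noteq> UNIV"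
  shows "\<exists>\<mu>. \<mu> \<noteq> 0 \<and> (\<forall>h\<in>H. Re (\<mu> * h) \<in> \<int>)"
proof (cases "\<exists>e>0. \<forall>h\<in>H. h \<noteq> 0 \<longrightarrow> e \<le> norm h")
  case True
  then obtain e where e: "e > 0" "\<And>h. h \<in> H \<Longrightarrow> h \<noteq> 0 \<Longrightarrow> e \<le> norm h" by auto
  show ?thesis
  proof (cases "\<forall>h\<in>H. h = 0")
    case True then show ?thesis by (intro exI[of _ 1]) auto
  next
    case False
    define P where "P = {norm h | h. h \<in> H \<and> h \<noteq> 0}"
    have Pne: "P \<noteq> {}" using False by (auto simp: P_def)
    have bdd: "bdd_below P" unfolding bdd_below_def P_def by (intro exI[of _ 0]) auto
    define \<delta> where "\<delta> = Inf P"
    have de: "\<delta> \<ge> e" unfolding \<delta>_def by (rule cInf_greatest[OF Pne]) (use e in \<open>auto simp: P_def\<close>)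
    have dle: "\<delta> \<le> norm h" if "h \<in> H" "h \<noteq> 0" for h
      unfolding \<delta>_def by (rule cInf_lower[OF _ bdd]) (use that in \<open>auto simp: P_def\<close>)
    have "Inf P < 2 * \<delta>" using de e by (simp add: \<delta>_def)
    then obtain p where "p \<in> P" "p < 2 * \<delta>" using cInf_less_iff[OF Pne bdd] by auto
    then obtain d where d: "d \<in> H" "d \<noteq> 0" "norm d < 2 * \<delta>" by (auto simp: P_def)
    define q where "q = \<delta>\<^sup>2 / (norm d)\<^sup>2 - 1/4"
    have nd0: "norm d > 0" using d by simp
    have "(norm d)\<^sup>2 < (2 * \<delta>)\<^sup>2" using d(3) nd0 by (intro power_strict_mono) auto
    then have "q > 0" unfolding q_def using nd0 by (simp add: field_simps power_mult_distrib)
    define \<eta> where "\<eta> = sqrt q"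
    have eta: "\<eta> > 0" "\<eta>\<^sup>2 = q" using \<open>q > 0\<close> by (auto simp: \<eta>_def)
    have gap: "\<not> (0 < Im (w / d) \<and> Im (w / d) < \<eta>)" if w: "w \<in> H" for w
    proof
      assume g: "0 < Im (w / d) \<and> Im (w / d) < \<eta>"
      define x where "x = Re (w / d)"
      define k where "k = \<lfloor>x + 1/2\<rfloor>"
      have kx: "\<bar>x - of_int k\<bar> \<le> 1/2" unfolding k_def by linarith
      define w' where "w' = w - of_int k * d"
      have w'H: "w' \<in> H" unfolding w'_def using sgrp_diff[OF H w sgrp_int[OF H d(1)]] .
      have w'd: "w' / d = Complex (x - of_int k) (Im (w / d))"
        using d(2) by (simp add: w'_def x_def complex_eq_iff diff_divide_distrib)
      have "Im (w' / d) = Im (w / d)" using w'd by simp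
      then have "w' \<noteq> 0" using g by auto
      then have "\<delta> \<le> norm w'" using dle w'H by auto
      moreover have "norm w' = norm d * norm (w' / d)" using d(2) by (simp add: norm_divide)
      moreover have "(norm (w' / d))\<^sup>2 = (x - of_int k)\<^sup>2 + (Im (w / d))\<^sup>2"
        unfolding w'd by (simp add: cmod_def)
      moreover have "(x - of_int k)\<^sup>2 \<le> 1/4"
      proof -
        have "(x - of_int k)\<^sup>2 = \<bar>x - of_int k\<bar>\<^sup>2" by simp
        also have "\<dots> \<le> (1/2)\<^sup>2" using kx by (intro power_mono) auto
        finally show ?thesis by (simp add: power_divide)
      qed
      moreover have "(Im (w / d))\<^sup>2 < \<eta>\<^sup>2" using g by (intro power_strict_mono) auto
      ultimately have "(norm (w' / d))\<^sup>2 < \<delta>\<^sup>2 / (norm d)\<^sup>2" using eta unfolding q_def by linarith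
      then have "(norm d * norm (w' / d))\<^sup>2 < \<delta>\<^sup>2" using nd0 by (simp add: field_simps power_mult_distrib)
      then have "norm w' < \<delta>" using \<open>norm w' = _\<close> de e
        power_less_imp_less_base[of "norm w'" 2 \<delta>] by simp
      then show False using \<open>\<delta> \<le> norm w'\<close> by simp
    qed
    show ?thesis by (rule gap_mu[OF H d(2) eta(1) gap])
  qed
next
  case False
  then have small: "\<exists>h\<in>H. h \<noteq> 0 \<and> norm h < e" if "e > 0" for e
    using that by (auto simp: not_le)
  show ?thesis
  proof (cases "\<forall>e>0. \<exists>u\<in>H. \<exists>v\<in>H. u \<noteq> 0 \<and> norm u < e \<and> norm v < e \<and> Im (v / u) \<noteq> 0")
    case True
    have "w \<in> closure H" for w
    proof (unfold closure_approachable, intro allI impI)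
      fix e :: real assume "e > 0"
      then obtain u v where uv: "u \<in> H" "v \<in> H" "u \<noteq> 0" "norm u < e/2" "norm v < e/2" "Im (v / u) \<noteq> 0"
        using True[rule_format, of "e/2"] by auto
      define \<rho> where "\<rho> = v / u"
      define b where "b = Im (w / u) / Im \<rho>"
      define a where "a = Re (w / u) - b * Re \<rho>"
      have rho: "Im \<rho> \<noteq> 0" using uv(6) by (simp add: \<rho>_def)
      have "w / u = of_real a + of_real b * \<rho>"
        using rho by (simp add: complex_eq_iff a_def b_def)
      then have wab: "w = of_real a * u + of_real b * v" using uv(3)
        by (simp add: \<rho>_def field_simps)
      define h where "h = of_int \<lfloor>a\<rfloor> * u + of_int \<lfloor>b\<rfloor> * v"
      have hH: "h \<in> H" unfolding h_def using H sgrp_int[OF H uv(1)] sgrp_int[OF H uv(2)]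
        by (auto simp: sgrp_def)
      have "w - h = of_real (a - of_int \<lfloor>a\<rfloor>) * u + of_real (b - of_int \<lfloor>b\<rfloor>) * v"
        unfolding wab h_def by (simp add: algebra_simps)
      then have "norm (w - h) \<le> \<bar>a - of_int \<lfloor>a\<rfloor>\<bar> * norm u + \<bar>b - of_int \<lfloor>b\<rfloor>\<bar> * norm v"
        by (metis norm_mult norm_of_real norm_triangle_ineq)
      also have "\<dots> \<le> 1 * norm u + 1 * norm v"
        by (intro add_mono mult_right_mono) (simp_all, linarith+)
      also have "\<dots> < e" using uv by simp
      finally show "\<exists>y\<in>H. dist y w < e" using hH by (intro bexI[of _ h]) (auto simp: dist_norm norm_minus_commute)
    qed
    then have False using nd by auto
    then show ?thesis ..
  next
    case False
    then obtain e where e: "e > 0" and col: "\<And>u v. u \<in> H \<Longrightarrow> v \<in> H \<Longrightarrow> u \<noteq> 0 \<Longrightarrow> norm u < e \<Longrightarrow> norm v < e \<Longrightarrow> Im (v / u) = 0"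
      by blast
    obtain d where d: "d \<in> H" "d \<noteq> 0" "norm d < e" using small[OF e] by auto
    have nd0: "norm d > 0" using d by simp
    define S0 where "S0 = {s. of_real s * d \<in> H}"
    have S0: "sgrp S0" using H unfolding S0_def sgrp_def by (auto simp: distrib_right)
    have ng0: "\<exists>s\<in>S0. 0 < s \<and> s < \<eta>" if eta0: "\<eta> > 0" for \<eta>
    proof -
      obtain h where h: "h \<in> H" "h \<noteq> 0" "norm h < min e (\<eta> * norm d)"
        using small[of "min e (\<eta> * norm d)"] eta0 e nd0 by auto
      have "Im (h / d) = 0" using col[OF d(1) h(1) d(2) d(3)] h by auto
      define s where "s = Re (h / d)"
      have hs: "h = of_real s * d" using \<open>Im (h / d) = 0\<close> d(2)
        by (simp add: s_def) (metis complex_is_Real_iff nonzero_eq_divide_eq of_real_Re)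
      have "norm h = \<bar>s\<bar> * norm d" using hs by (simp add: norm_mult)
      then have "\<bar>s\<bar> < \<eta>" using h(3) nd0 by (simp add: field_simps)
      have "s \<noteq> 0" using hs h(2) by auto
      have "s \<in> S0" "-s \<in> S0" using h(1) hs H unfolding S0_def sgrp_def by auto
      then show ?thesis using \<open>\<bar>s\<bar> < \<eta>\<close> \<open>s \<noteq> 0\<close>
        by (cases "s > 0") (auto intro!: bexI)
    qed
    define S where "S = (\<lambda>h. Im (h / d)) ` H"
    have SS: "sgrp S" unfolding S_def
      by (rule sgrp_image_lin[OF H]) (auto simp: add_divide_distrib)
    show ?thesis
    proof (cases "\<exists>\<eta>>0. \<forall>h\<in>H. \<not> (0 < Im (h / d) \<and> Im (h / d) < \<eta>)")
      case True
      then obtain \<eta> where "\<eta> > 0" "\<And>h. h \<in> H \<Longrightarrow> \<not> (0 < Im (h / d) \<and> Im (h / d) < \<eta>)" by blast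
      then show ?thesis using gap_mu[OF H d(2)] by blast
    next
      case False
      then have ng: "\<exists>s\<in>S. 0 < s \<and> s < \<eta>" if "\<eta> > 0" for \<eta>
        using that unfolding S_def by auto
      have "w \<in> closure H" for w
      proof (unfold closure_approachable, intro allI impI)
        fix \<epsilon> :: real assume ep: "\<epsilon> > 0"
        define e' where "e' = \<epsilon> / (2 * norm d)"
        have e': "e' > 0" using ep nd0 by (simp add: e'_def)
        obtain s1 where s1: "s1 \<in> S" "\<bar>s1 - Im (w / d)\<bar> < e'" using nogap_dense[OF SS ng e'] by blast
        then obtain h where h: "h \<in> H" "Im (h / d) = s1" unfolding S_def by auto
        define x where "x = Re ((w - h) / d)"
        obtain s where s: "s \<in> S0" "\<bar>s - x\<bar> < e'" using nogap_dense[OF S0 ng0 e'] by blast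
        define h' where "h' = h + of_real s * d"
        have h'H: "h' \<in> H" using h s H unfolding h'_def S0_def sgrp_def by auto
        have "(w - h') / d = Complex (x - s) (Im (w / d) - s1)"
          using d(2) h(2) by (simp add: complex_eq_iff h'_def x_def diff_divide_distrib add_divide_distrib)
        then have "norm ((w - h') / d) \<le> \<bar>x - s\<bar> + \<bar>Im (w / d) - s1\<bar>"
          using cmod_le[of "(w - h') / d"] by simp
        also have "\<dots> < 2 * e'" using s s1 by linarith
        finally have "norm (w - h') < 2 * e' * norm d" using nd0 by (simp add: norm_divide field_simps)
        then have "norm (w - h') < \<epsilon>" using nd0 by (simp add: e'_def)
        then show "\<exists>y\<in>H. dist y w < \<epsilon>" using h'H by (intro bexI[of _ h']) (auto simp: dist_norm norm_minus_commute)
      qed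
      then have False using nd by auto
      then show ?thesis ..
    qed
  qed
qed



definition E8L :: "int list list" where
 "E8L = [[-4, -5, -7, -10, -8, -6, -4, -2],
[-5, -8, -10, -15, -12, -9, -6, -3],
[-7, -10, -14, -20, -16, -12, -8, -4],
[-10, -15, -20, -30, -24, -18, -12, -6],
[-8, -12, -16, -24, -20, -15, -10, -5],
[-6, -9, -12, -18, -15, -12, -8, -4],
[-4, -6, -8, -12, -10, -8, -6, -3],
[-2, -3, -4, -6, -5, -4, -3, -2]]"

definition E8i :: "nat \<Rightarrow> nat \<Rightarrow> int" where "E8i i j = E8L ! i ! j"

definition ginv0 :: "nat \<Rightarrow> nat \<Rightarrow> int" where
  "ginv0 i j =
     (if i < 6 \<and> j < 6 then (if i div 2 = j div 2 \<and> i \<noteq> j then 1 else 0)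
      else if 6 \<le> i \<and> i < 14 \<and> 6 \<le> j \<and> j < 14 then E8i (i - 6) (j - 6)
      else if 14 \<le> i \<and> i < 22 \<and> 14 \<le> j \<and> j < 22 then E8i (i - 14) (j - 14)
      else 0)"

lemma E8_adj_alt: "E8_adj i j \<longleftrightarrow> (i=0\<and>j=2 \<or> i=2\<and>j=0 \<or> i=2\<and>j=3 \<or> i=3\<and>j=2 \<or> i=3\<and>j=4 \<or> i=4\<and>j=3
  \<or> i=4\<and>j=5 \<or> i=5\<and>j=4 \<or> i=5\<and>j=6 \<or> i=6\<and>j=5 \<or> i=6\<and>j=7 \<or> i=7\<and>j=6 \<or> i=1\<and>j=3 \<or> i=3\<and>j=1)"
  unfolding E8_adj_def by (auto simp: doubleton_eq_iff)

lemma gram_eq2: "i < 22 \<Longrightarrow> j < 22 \<Longrightarrow> gram n i j = gram 2 i j"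
  unfolding gram_def by auto

lemma inv22_list: "list_all (\<lambda>i. list_all (\<lambda>l. (\<Sum>k\<leftarrow>[0..<22]. ginv0 i k * gram 2 k l) = (if i = l then 1 else 0)) [0..<22]) [0..<22]"
  unfolding gram_def E8m_def E8_adj_alt ginv0_def E8i_def E8L_def
  by code_simp

lemma inv22: "i < 22 \<Longrightarrow> l < 22 \<Longrightarrow> (\<Sum>k<22. ginv0 i k * gram n k l) = (if i = l then 1 else 0)"
proof -
  assume il: "i < 22" "l < 22"
  have "(\<Sum>k<22. ginv0 i k * gram n k l) = (\<Sum>k<22. ginv0 i k * gram 2 k l)"
  proof (intro sum.cong refl)
    fix k assume "k \<in> {..<22::nat}"
    then have "gram n k l = gram 2 k l" using il gram_eq2[of k l n] by simp
    then show "ginv0 i k * gram n k l = ginv0 i k * gram 2 k l" by (simp only:)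
  qed
  also have "\<dots> = (\<Sum>k\<leftarrow>[0..<22]. ginv0 i k * gram 2 k l)"
    by (simp only: interv_sum_list_conv_sum_set_nat set_upt atLeast0LessThan)
  also have "\<dots> = (if i = l then 1 else 0)"
  proof -
    have A: "\<forall>i\<in>set [0..<22]. \<forall>l\<in>set [0..<22]. (\<Sum>k\<leftarrow>[0..<22]. ginv0 i k * gram 2 k l) = (if i = l then 1 else 0)"
      using inv22_list unfolding list_all_iff .
    have "i \<in> set [0..<22]" "l \<in> set [0..<22]" using il by (simp_all only: set_upt atLeastLessThan_iff, simp_all)
    then show ?thesis using A by blast
  qed
  finally show ?thesis .
qed

definition ginvd :: "nat \<Rightarrow> nat \<Rightarrow> nat \<Rightarrow> int" where
  "ginvd n i j = (if i < 22 \<and> j < 22 then 2 * (int n - 1) * ginv0 i j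
                  else if i = 22 \<and> j = 22 then -1 else 0)"

lemma gram_22: "k < 22 \<Longrightarrow> gram n k 22 = 0" "k < 22 \<Longrightarrow> gram n 22 k = 0" "gram n 22 22 = - 2 * (int n - 1)"
  by (auto simp: gram_def)

lemma ginv_gram:
  assumes "i < 23" "l < 23"
  shows "(\<Sum>k<23. ginvd n i k * gram n k l) = (if i = l then 2 * (int n - 1) else 0)"
proof -
  have s: "(\<Sum>k<23. f k) = (\<Sum>k<22. f k) + f 22" for f :: "nat \<Rightarrow> int"
  proof -
    have "(23::nat) = Suc 22" by simp
    then show ?thesis by (simp only: sum.lessThan_Suc)
  qed
  consider "i < 22" "l < 22" | "i < 22" "l = 22" | "i = 22" "l < 22" | "i = 22" "l = 22"
    using assms by linarith
  then show ?thesis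
  proof cases
    case 1
    have z: "ginvd n i 22 = 0" using 1 by (simp add: ginvd_def)
    have "(\<Sum>k<22. ginvd n i k * gram n k l) = (\<Sum>k<22. 2 * (int n - 1) * (ginv0 i k * gram n k l))"
      using 1 by (intro sum.cong refl) (simp add: ginvd_def)
    also have "\<dots> = 2 * (int n - 1) * (\<Sum>k<22. ginv0 i k * gram n k l)"
      by (simp only: sum_distrib_left)
    finally show ?thesis using 1 inv22[of i l n] by (simp only: s z) simp
  next
    case 2
    have "(\<Sum>k<22. ginvd n i k * gram n k l) = 0"
      using 2 by (intro sum.neutral) (simp add: gram_22)
    then show ?thesis using 2 by (simp only: s) (simp add: ginvd_def)
  next
    case 3
    have "(\<Sum>k<22. ginvd n i k * gram n k l) = 0"
      using 3 by (intro sum.neutral) (simp add: ginvd_def)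
    then show ?thesis using 3 by (simp only: s) (simp add: gram_22)
  next
    case 4
    have "(\<Sum>k<22. ginvd n i k * gram n k l) = 0"
      using 4 by (intro sum.neutral) (simp add: ginvd_def)
    then show ?thesis using 4 by (simp only: s) (simp add: gram_22 ginvd_def)
  qed
qed

lemma ginv_apply:
  fixes y :: "nat \<Rightarrow> 'a::comm_ring_1"
  assumes i: "i < 23"
  shows "(\<Sum>k<23. of_int (ginvd n i k) * (\<Sum>l<23. of_int (gram n k l) * y l)) = of_int (2 * (int n - 1)) * y i"
proof -
  have "(\<Sum>k<23. of_int (ginvd n i k) * (\<Sum>l<23. of_int (gram n k l) * y l))
      = (\<Sum>k<23. \<Sum>l<23. of_int (ginvd n i k) * of_int (gram n k l) * y l)"
    by (simp only: sum_distrib_left mult.assoc)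
  also have "\<dots> = (\<Sum>l<23. \<Sum>k<23. of_int (ginvd n i k) * of_int (gram n k l) * y l)"
    by (rule sum.swap)
  also have "\<dots> = (\<Sum>l<23. (\<Sum>k<23. of_int (ginvd n i k) * of_int (gram n k l)) * y l)"
    by (simp only: sum_distrib_right)
  also have "\<dots> = (\<Sum>l<23. of_int (\<Sum>k<23. ginvd n i k * gram n k l) * y l)"
    by (simp only: of_int_sum of_int_mult)
  also have "\<dots> = (\<Sum>l<23. (if i = l then of_int (2 * (int n - 1)) * y l else 0))"
  proof (intro sum.cong refl)
    fix l assume "l \<in> {..<23::nat}"
    then have "l < 23" by simp
    show "of_int (\<Sum>k<23. ginvd n i k * gram n k l) * y l = (if i = l then of_int (2 * (int n - 1)) * y l else 0)"
      by (simp only: ginv_gram[OF i \<open>l < 23\<close>]) simp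
  qed
  also have "\<dots> = of_int (2 * (int n - 1)) * y i" using i by (subst sum.delta') auto
  finally show ?thesis .
qed



lemma E8m_sym: "E8m i j = E8m j i"
  unfolding E8m_def E8_adj_def by (simp add: insert_commute)

lemma gram_sym: "gram n i j = gram n j i"
  unfolding gram_def using E8m_sym by auto

lemma bilC_sym: "bilC n x y = bilC n y x"
  unfolding bilC_def by (subst sum.swap) (simp add: gram_sym mult_ac)

lemma bilC_lin1: "bilC n (\<lambda>i. a * x i + b * y i) z = a * bilC n x z + b * bilC n y z"
  unfolding bilC_def by (simp add: algebra_simps sum.distrib sum_distrib_left)

lemma bilC_lin2: "bilC n z (\<lambda>i. a * x i + b * y i) = a * bilC n z x + b * bilC n z y"
  using bilC_lin1 bilC_sym by metis

lemma bilC_scale1: "bilC n (\<lambda>i. a * x i) z = a * bilC n x z"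
  using bilC_lin1[of n a x 0 x z] by simp

lemma bilC_scale2: "bilC n z (\<lambda>i. a * x i) = a * bilC n z x"
  using bilC_scale1 bilC_sym by metis

lemma bilC_cnj: "cnj (bilC n x y) = bilC n (cnjv x) (cnjv y)"
  unfolding bilC_def cnjv_def by (simp add: cnj_sum)

lemma bilC_ofint: "bilC n (ofintv x) (ofintv y) = of_int (bil n x y)"
  unfolding bilC_def bil_def ofintv_def by simp

lemma cnjv_ofint: "cnjv (ofintv x) = ofintv x"
  unfolding cnjv_def ofintv_def by simp


lemma cline_mem: "x \<in> cline x"
  unfolding cline_def by (rule CollectI, rule exI[of _ 1]) simp

lemma cline_memD: "y \<in> cline x \<Longrightarrow> \<exists>c. y = (\<lambda>i. c * x i)"
  unfolding cline_def by auto

lemma cline_eqD: "cline x = cline y \<Longrightarrow> \<exists>e. x = (\<lambda>i. e * y i)"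
  using cline_mem[of x] cline_memD by metis

lemma cline_scale: "c \<noteq> 0 \<Longrightarrow> cline (\<lambda>i. c * x i) = cline x"
  unfolding cline_def
proof (safe)
  fix d assume "c \<noteq> 0"
  show "\<exists>e. (\<lambda>i. d * (c * x i)) = (\<lambda>i. e * x i) \<and> True" by (intro exI[of _ "d * c"]) (simp add: mult.assoc)
next
  fix d assume "c \<noteq> 0"
  show "\<exists>e. (\<lambda>i. d * x i) = (\<lambda>i. e * (c * x i)) \<and> True" using \<open>c \<noteq> 0\<close>
    by (intro exI[of _ "d / c"]) auto
qed

lemma act_cline: "act n a z (cline v) = cline (\<lambda>i. v i + bilC n v (ofintv z) * ofintv a i)"
proof (rule set_eqI, rule iffI)
  fix x assume "x \<in> act n a z (cline v)"
  then obtain y where x: "x = (\<lambda>i. y i + bilC n y (ofintv z) * ofintv a i)" "y \<in> cline v"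
    unfolding act_def by auto
  then obtain e where y: "y = (\<lambda>i. e * v i)" using cline_memD by blast
  then have "x = (\<lambda>i. e * (v i + bilC n v (ofintv z) * ofintv a i))" using x unfolding y by (simp add: bilC_scale1 fun_eq_iff algebra_simps)
  then show "x \<in> cline (\<lambda>i. v i + bilC n v (ofintv z) * ofintv a i)" unfolding cline_def by blast
next
  fix x assume "x \<in> cline (\<lambda>i. v i + bilC n v (ofintv z) * ofintv a i)"
  then obtain e where x: "x = (\<lambda>i. e * (v i + bilC n v (ofintv z) * ofintv a i))" using cline_memD by blast
  have m: "(\<lambda>i. e * v i) \<in> cline v" unfolding cline_def by (rule CollectI, rule exI[of _ e]) simp
  have e: "x = (\<lambda>i. e * v i + bilC n (\<lambda>i. e * v i) (ofintv z) * ofintv a i)"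
    using x by (simp add: bilC_scale1 fun_eq_iff algebra_simps)
  show "x \<in> act n a z (cline v)" unfolding act_def
    apply (rule CollectI, rule exI[of _ "\<lambda>i. e * v i"], rule conjI)
    using e m by simp_all
qed

lemma bil_sym: "bil n x y = bil n y x"
  using bilC_ofint[of n x y] bilC_ofint[of n y x] bilC_sym[of n "ofintv x" "ofintv y"] by simp

locale fibsetup =
  fixes n :: nat and \<alpha> :: "nat \<Rightarrow> int" and t :: "nat \<Rightarrow> complex"
  assumes n2: "n \<ge> 2" and aL: "\<alpha> \<in> Lam" and prim: "primitive \<alpha>" and aa: "bil n \<alpha> \<alpha> = 0"
    and tL: "t \<in> LamC" and tA: "bilC n t (ofintv \<alpha>) = 0" and tnA: "t \<notin> cline (ofintv \<alpha>)"
    and tt: "bilC n t t = 0" and Imt: "Im (bilC n t (cnjv t)) = 0" and Ret: "Re (bilC n t (cnjv t)) > 0"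
begin

abbreviation "A \<equiv> ofintv \<alpha>"
definition "T0 = bilC n t (cnjv t)"
definition "\<psi> c = (\<lambda>i. t i + c * A i)"
definition "\<Phi> c = cline (\<psi> c)"
definition "HH = {bilC n t (ofintv z) | z. z \<in> Lam \<and> bil n z \<alpha> = 0}"

lemma AA: "bilC n A A = 0" using aa by (simp add: bilC_ofint)
lemma At: "bilC n A t = 0" using tA bilC_sym[of n A t] by simp
lemma cnjA: "cnjv A = A" by (rule cnjv_ofint)
lemma At': "bilC n A (cnjv t) = 0"
  using bilC_cnj[of n A t] At cnjA by simp
lemma T0nz: "T0 \<noteq> 0" using Ret by (auto simp: T0_def)
lemma T0real: "cnj T0 = T0" using Imt by (simp add: T0_def complex_eq_iff)

lemma a_nz: "\<alpha> \<noteq> (\<lambda>i. 0)"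
proof
  assume a0: "\<alpha> = (\<lambda>i. 0)"
  have "(\<lambda>i. 0::int) \<in> Lam \<and> \<alpha> = (\<lambda>i. 2 * (\<lambda>i. 0::int) i)" using a0 by (simp add: Lam_def)
  then have "(2::int) = 1 \<or> (2::int) = -1" using prim unfolding primitive_def by blast
  then show False by simp
qed

lemma ex_i0: "\<exists>i0. i0 < 23 \<and> A i0 \<noteq> 0"
proof -
  obtain i where "\<alpha> i \<noteq> 0" using a_nz by auto
  moreover then have "i < 23" using aL unfolding Lam_def by (cases "i < 23") auto
  ultimately show ?thesis by (auto simp: ofintv_def)
qed

definition "i0 = (SOME i. i < 23 \<and> A i \<noteq> 0)"
lemma i0: "i0 < 23" "A i0 \<noteq> 0" using someI_ex[OF ex_i0] by (auto simp: i0_def)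

definition "ff x = bilC n x (cnjv t) / T0"
definition "gg x = (x i0 - ff x * t i0) / A i0"

lemma ff_scale: "ff (\<lambda>i. e * x i) = e * ff x" by (simp add: ff_def bilC_scale1)
lemma gg_scale: "gg (\<lambda>i. e * x i) = e * gg x" by (simp add: gg_def ff_scale field_simps)

lemma bil_psi1: "bilC n (\<psi> c) z = bilC n t z + c * bilC n A z"
  using bilC_lin1[of n 1 t c A z] by (simp add: \<psi>_def)
lemma bil_psi2: "bilC n z (\<psi> c) = bilC n z t + c * bilC n z A"
  using bil_psi1[of c z] bilC_sym[of n z] by simp
lemma cnj_psi: "cnjv (\<psi> c) = (\<lambda>i. 1 * cnjv t i + cnj c * A i)"
  by (simp add: \<psi>_def cnjv_def ofintv_def)

lemma ff_psi: "ff (\<psi> c) = 1" using T0nz by (simp add: ff_def bil_psi1 At' T0_def)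
lemma gg_psi: "gg (\<psi> c) = c" using i0 by (simp only: gg_def ff_psi) (simp add: \<psi>_def)

lemma psi_nz: "\<psi> c \<noteq> (\<lambda>i. 0)"
proof
  assume "\<psi> c = (\<lambda>i. 0)"
  then have "ff (\<psi> c) = ff (\<lambda>i. 0 * (\<psi> c) i)" by simp
  then show False by (simp only: ff_scale ff_psi) simp
qed

lemma A_LamC: "A \<in> LamC" using aL by (simp add: Lam_def LamC_def ofintv_def)
lemma psi_LamC: "\<psi> c \<in> LamC" using tL A_LamC by (simp add: LamC_def \<psi>_def)

lemma psi_psi: "bilC n (\<psi> c) (\<psi> c) = 0"
  by (simp add: bil_psi1 bil_psi2 tt tA At AA)
lemma bil_cpsi: "bilC n z (cnjv (\<psi> c)) = bilC n z (cnjv t) + cnj c * bilC n z A"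
  unfolding cnj_psi using bilC_lin2[of n z 1 "cnjv t" "cnj c" A] by simp
lemma psi_cnj: "bilC n (\<psi> c) (cnjv (\<psi> c)) = T0"
  by (simp add: bil_cpsi bil_psi1 tA At' AA T0_def)
lemma psi_A: "bilC n (\<psi> c) A = 0"
  by (simp add: bil_psi1 tA AA)

lemma Phi_inj: "inj \<Phi>"
proof (rule injI)
  fix c c' assume "\<Phi> c = \<Phi> c'"
  then obtain e where e: "\<psi> c = (\<lambda>i. e * \<psi> c' i)" unfolding \<Phi>_def using cline_eqD by blast
  then have "ff (\<psi> c) = e * ff (\<psi> c')" using ff_scale by metis
  then have e1: "e = 1" by (simp add: ff_psi)
  have "gg (\<psi> c) = e * gg (\<psi> c')" using e gg_scale by metis
  then show "c = c'" using e1 by (simp add: gg_psi)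
qed

lemma Phi_Plines: "\<Phi> c \<in> Plines"
  unfolding Plines_def \<Phi>_def using psi_LamC psi_nz by blast

lemma qmap_Phi: "qmap \<alpha> (\<Phi> c) = plane \<alpha> t"
proof (rule set_eqI, rule iffI)
  fix x assume "x \<in> qmap \<alpha> (\<Phi> c)"
  then obtain y c1 where y: "x = (\<lambda>i. y i + c1 * A i)" "y \<in> cline (\<psi> c)" unfolding qmap_def \<Phi>_def by auto
  then obtain e where "y = (\<lambda>i. e * \<psi> c i)" using cline_memD by blast
  then have "x = (\<lambda>i. (e * c + c1) * A i + e * t i)" using y by (simp add: \<psi>_def fun_eq_iff algebra_simps)
  then show "x \<in> plane \<alpha> t" unfolding plane_def by blast
next
  fix x assume "x \<in> plane \<alpha> t"
  then obtain c1 d where x: "x = (\<lambda>i. c1 * A i + d * t i)" unfolding plane_def by auto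
  have m: "(\<lambda>i. d * \<psi> c i) \<in> cline (\<psi> c)" unfolding cline_def by (rule CollectI, rule exI[of _ d]) simp
  have e: "x = (\<lambda>i. d * \<psi> c i + (c1 - d * c) * A i)" using x by (simp add: \<psi>_def fun_eq_iff algebra_simps)
  show "x \<in> qmap \<alpha> (\<Phi> c)" unfolding qmap_def \<Phi>_def
    apply (rule CollectI, rule exI[of _ "\<lambda>i. d * \<psi> c i"], rule exI[of _ "c1 - d * c"], rule conjI)
    using e m by simp_all
qed

lemma fiber_eq: "fiber n \<alpha> (plane \<alpha> t) = range \<Phi>"
proof (safe)
  fix c
  have "\<Phi> c \<in> Omega_perp n \<alpha>" unfolding Omega_perp_def \<Phi>_def
    apply (rule CollectI, rule exI[of _ "\<psi> c"])
    using psi_LamC psi_nz psi_psi psi_cnj psi_A Imt Ret by (simp add: T0_def)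
  then show "\<Phi> c \<in> fiber n \<alpha> (plane \<alpha> t)"
    unfolding fiber_def using qmap_Phi by simp
next
  fix L assume L: "L \<in> fiber n \<alpha> (plane \<alpha> t)"
  then obtain x where x: "L = cline x" "x \<in> LamC" "x \<noteq> (\<lambda>i. 0)" "Re (bilC n x (cnjv x)) > 0"
    and q: "qmap \<alpha> L = plane \<alpha> t"
    unfolding fiber_def Omega_perp_def by auto
  have "x \<in> qmap \<alpha> L" unfolding qmap_def x(1)
    by (rule CollectI, rule exI[of _ x], rule exI[of _ 0]) (simp add: cline_mem)
  then obtain a b where ab: "x = (\<lambda>i. a * A i + b * t i)" using q unfolding plane_def by auto
  have "b \<noteq> 0"
  proof
    assume "b = 0"
    then have xa: "x = (\<lambda>i. a * A i)" using ab by simp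
    then have "cnjv x = (\<lambda>i. cnj a * A i)" by (simp add: cnjv_def ofintv_def)
    then have "bilC n x (cnjv x) = 0" using xa by (simp add: bilC_scale1 bilC_scale2 AA)
    then show False using x(4) by simp
  qed
  have "x = (\<lambda>i. b * \<psi> (a / b) i)" using ab \<open>b \<noteq> 0\<close> by (auto simp: \<psi>_def field_simps)
  then have "L = \<Phi> (a / b)" using x(1) \<open>b \<noteq> 0\<close> by (simp add: \<Phi>_def cline_scale)
  then show "L \<in> range \<Phi>" by simp
qed

lemma act_Phi: assumes "bil n z \<alpha> = 0" shows "act n \<alpha> z (\<Phi> c) = \<Phi> (c + bilC n t (ofintv z))"
proof -
  have "bilC n A (ofintv z) = 0" using assms bil_sym[of n \<alpha> z] by (simp add: bilC_ofint)
  then have "(\<lambda>i. \<psi> c i + bilC n (\<psi> c) (ofintv z) * A i) = \<psi> (c + bilC n t (ofintv z))"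
    by (simp only: bil_psi1) (simp add: \<psi>_def algebra_simps)
  then show ?thesis by (simp add: \<Phi>_def act_cline)
qed

lemma orbit_Phi: "orbit n \<alpha> (\<Phi> c) = \<Phi> ` ((+) c ` HH)"
proof (rule set_eqI, rule iffI)
  fix L assume "L \<in> orbit n \<alpha> (\<Phi> c)"
  then obtain g where g: "L = g (\<Phi> c)" "g \<in> gQ n \<alpha>" unfolding orbit_def by auto
  then obtain z where z: "z \<in> Lam" "bil n z \<alpha> = 0" "L = act n \<alpha> z (\<Phi> c)"
    unfolding gQ_def by auto
  then have "L = \<Phi> (c + bilC n t (ofintv z))" using act_Phi by simp
  moreover have "bilC n t (ofintv z) \<in> HH" using z unfolding HH_def by blast
  ultimately show "L \<in> \<Phi> ` ((+) c ` HH)" by blast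
next
  fix L assume "L \<in> \<Phi> ` ((+) c ` HH)"
  then obtain h where h: "L = \<Phi> (c + h)" "h \<in> HH" by auto
  then obtain z where z: "z \<in> Lam" "bil n z \<alpha> = 0" "L = \<Phi> (c + bilC n t (ofintv z))"
    unfolding HH_def by auto
  then have "L = act n \<alpha> z (\<Phi> c)" using act_Phi by simp
  moreover have "act n \<alpha> z \<in> gQ n \<alpha>" using z unfolding gQ_def by blast
  ultimately show "L \<in> orbit n \<alpha> (\<Phi> c)" unfolding orbit_def by auto
qed

end



abbreviation "XX \<equiv> LamC - {\<lambda>i. 0}"

lemma istop_PT: "istopology (\<lambda>U. U \<subseteq> Plines \<and> openin (top_of_set XX) {x \<in> XX. cline x \<in> U})"
  unfolding istopology_def
proof (rule conjI; intro allI impI)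
  fix S T
  assume S: "S \<subseteq> Plines \<and> openin (top_of_set XX) {x \<in> XX. cline x \<in> S}"
     and T: "T \<subseteq> Plines \<and> openin (top_of_set XX) {x \<in> XX. cline x \<in> T}"
  have "{x \<in> XX. cline x \<in> S \<inter> T} = {x \<in> XX. cline x \<in> S} \<inter> {x \<in> XX. cline x \<in> T}" by auto
  then show "S \<inter> T \<subseteq> Plines \<and> openin (top_of_set XX) {x \<in> XX. cline x \<in> S \<inter> T}"
    using S T by (auto intro: openin_Int)
next
  fix K assume K: "\<forall>S\<in>K. S \<subseteq> Plines \<and> openin (top_of_set XX) {x \<in> XX. cline x \<in> S}"
  have "{x \<in> XX. cline x \<in> \<Union>K} = \<Union>((\<lambda>S. {x \<in> XX. cline x \<in> S}) ` K)" by auto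
  moreover have "openin (top_of_set XX) (\<Union>((\<lambda>S. {x \<in> XX. cline x \<in> S}) ` K))"
    using K by (intro openin_Union) auto
  ultimately show "\<Union>K \<subseteq> Plines \<and> openin (top_of_set XX) {x \<in> XX. cline x \<in> \<Union>K}"
    using K by auto
qed

lemma openin_PT: "openin PT U \<longleftrightarrow> U \<subseteq> Plines \<and> openin (top_of_set XX) {x \<in> XX. cline x \<in> U}"
  unfolding PT_def using istop_PT by simp

lemma topspace_PT: "topspace PT = Plines"
proof
  show "topspace PT \<subseteq> Plines" unfolding topspace_def using openin_PT by auto
  have "{x \<in> XX. cline x \<in> Plines} = XX" unfolding Plines_def by auto
  then have "openin PT Plines" unfolding openin_PT by simp
  then show "Plines \<subseteq> topspace PT" by (rule openin_subset)
qed

lemma cont_coord [continuous_intros]: "continuous_on S (\<lambda>x::nat \<Rightarrow> complex. x i)"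
  by (rule continuous_on_subset[OF continuous_on_product_coordinates]) simp

context fibsetup
begin

lemma psi_cont: "continuous_on UNIV \<psi>"
  unfolding \<psi>_def by (intro continuous_on_coordinatewise_then_product continuous_intros)

lemma ff_cont: "continuous_on S ff"
  unfolding ff_def bilC_def by (intro continuous_intros) (use T0nz in auto)

lemma gg_cont: "continuous_on S gg"
  unfolding gg_def by (intro continuous_intros ff_cont) (use i0 in auto)

lemma Phi_cont: "continuous_map euclidean (subtopology PT (range \<Phi>)) \<Phi>"
proof (rule continuous_map_into_subtopology)
  show "\<Phi> \<in> topspace euclidean \<rightarrow> range \<Phi>" by auto
  show "continuous_map euclidean PT \<Phi>"
    unfolding continuous_map_def
  proof (intro conjI allI impI)
    show "\<Phi> \<in> topspace euclidean \<rightarrow> topspace PT" using Phi_Plines topspace_PT by auto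
  next
    fix U assume "openin PT U"
    then have "openin (top_of_set XX) {x \<in> XX. cline x \<in> U}" by (simp add: openin_PT)
    then obtain T where T: "open T" "{x \<in> XX. cline x \<in> U} = XX \<inter> T" by (auto simp: openin_open)
    have "{c \<in> topspace euclidean. \<Phi> c \<in> U} = \<psi> -` T"
    proof -
      have "\<Phi> c \<in> U \<longleftrightarrow> \<psi> c \<in> T" for c
      proof -
        have "\<psi> c \<in> XX" using psi_LamC psi_nz by auto
        then have "\<psi> c \<in> {x \<in> XX. cline x \<in> U} \<longleftrightarrow> \<psi> c \<in> XX \<inter> T" using T by simp
        then show ?thesis using \<open>\<psi> c \<in> XX\<close> by (simp add: \<Phi>_def)
      qed
      then show ?thesis by auto
    qed
    moreover have "open (\<psi> -` T)" using continuous_open_preimage[OF psi_cont open_UNIV T(1)] by simp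
    ultimately show "openin euclidean {c \<in> topspace euclidean. \<Phi> c \<in> U}" by simp
  qed
qed

lemma Phi_open: "open_map euclidean (subtopology PT (range \<Phi>)) \<Phi>"
  unfolding open_map_def
proof (intro allI impI)
  fix V :: "complex set" assume "openin euclidean V"
  then have V: "open V" by simp
  define U where "U = {L \<in> Plines. \<exists>x \<in> XX. L = cline x \<and> ff x \<noteq> 0 \<and> gg x / ff x \<in> V}"
  have pre: "{x \<in> XX. cline x \<in> U} = XX \<inter> ({x. ff x \<noteq> 0} \<inter> (\<lambda>x. gg x / ff x) -` V)"
  proof (rule set_eqI, rule iffI)
    fix x assume "x \<in> {x \<in> XX. cline x \<in> U}"
    then obtain x' where x: "x \<in> XX" "x' \<in> XX" "cline x = cline x'" "ff x' \<noteq> 0" "gg x' / ff x' \<in> V"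
      unfolding U_def by auto
    then obtain e where e: "x = (\<lambda>i. e * x' i)" using cline_eqD by blast
    have "e \<noteq> 0" using e x(1) by auto
    have "ff x = e * ff x'" "gg x = e * gg x'" using e ff_scale gg_scale by auto
    then show "x \<in> XX \<inter> ({x. ff x \<noteq> 0} \<inter> (\<lambda>x. gg x / ff x) -` V)"
      using x \<open>e \<noteq> 0\<close> by auto
  next
    fix x assume x: "x \<in> XX \<inter> ({x. ff x \<noteq> 0} \<inter> (\<lambda>x. gg x / ff x) -` V)"
    then have "cline x \<in> Plines" unfolding Plines_def by auto
    then show "x \<in> {x \<in> XX. cline x \<in> U}" using x unfolding U_def by auto
  qed
  have "open ({x. ff x \<noteq> 0} \<inter> (\<lambda>x. gg x / ff x) -` V)"
  proof (rule continuous_open_preimage[OF _ _ V])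
    show "continuous_on {x. ff x \<noteq> 0} (\<lambda>x. gg x / ff x)"
      by (intro continuous_intros ff_cont gg_cont) auto
    have "{x. ff x \<noteq> 0} = UNIV \<inter> ff -` (-{0})" by auto
    then show "open {x. ff x \<noteq> 0}"
      using continuous_open_preimage[OF ff_cont[of UNIV] open_UNIV, of "-{0}"] by (simp add: open_Compl)
  qed
  then have "openin (top_of_set XX) {x \<in> XX. cline x \<in> U}" unfolding pre openin_open by blast
  moreover have "U \<subseteq> Plines" unfolding U_def by auto
  ultimately have oU: "openin PT U" unfolding openin_PT by simp
  have "\<Phi> ` V = U \<inter> range \<Phi>"
  proof (rule set_eqI, rule iffI)
    fix L assume "L \<in> \<Phi> ` V"
    then obtain c where c: "c \<in> V" "L = \<Phi> c" by auto
    have "\<psi> c \<in> XX" using psi_LamC psi_nz by auto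
    then show "L \<in> U \<inter> range \<Phi>" using c Phi_Plines unfolding U_def
      by (auto simp: \<Phi>_def ff_psi gg_psi intro!: bexI[of _ "\<psi> c"])
  next
    fix L assume L: "L \<in> U \<inter> range \<Phi>"
    then obtain c where c: "L = \<Phi> c" by auto
    from L obtain x where x: "x \<in> XX" "L = cline x" "ff x \<noteq> 0" "gg x / ff x \<in> V" unfolding U_def by auto
    have "cline (\<psi> c) = cline x" using c x by (simp add: \<Phi>_def)
    then obtain e where e: "\<psi> c = (\<lambda>i. e * x i)" using cline_eqD by blast
    then have "ff (\<psi> c) = e * ff x" "gg (\<psi> c) = e * gg x" using ff_scale gg_scale by auto
    then have "1 = e * ff x" "c = e * gg x" by (simp_all add: ff_psi gg_psi)
    then have "c = gg x / ff x" using x(3) by (simp add: field_simps)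
    then show "L \<in> \<Phi> ` V" using c x(4) by auto
  qed
  then show "openin (subtopology PT (range \<Phi>)) (\<Phi> ` V)"
    unfolding openin_subtopology using oU by blast
qed

lemma Phi_homeo: "homeomorphic_map euclidean (subtopology PT (range \<Phi>)) \<Phi>"
proof (rule bijective_open_imp_homeomorphic_map[OF Phi_cont Phi_open])
  show "\<Phi> ` topspace euclidean = topspace (subtopology PT (range \<Phi>))"
    using Phi_Plines by (auto simp: topspace_PT)
  show "inj_on \<Phi> (topspace euclidean)" using Phi_inj by (simp add: inj_on_def inj_def)
qed

lemma Phi_closure: "(subtopology PT (range \<Phi>)) closure_of (\<Phi> ` S) = \<Phi> ` closure S"
  using homeomorphic_map_closure_of[OF Phi_homeo, of S] by simp

lemma dense_orbit_iff: "dense_in (orbit n \<alpha> (\<Phi> c)) (range \<Phi>) \<longleftrightarrow> closure HH = UNIV"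
proof -
  have "dense_in (orbit n \<alpha> (\<Phi> c)) (range \<Phi>) \<longleftrightarrow> \<Phi> ` ((+) c ` closure HH) = \<Phi> ` UNIV"
    unfolding dense_in_def orbit_Phi Phi_closure closure_translation by auto
  also have "\<dots> \<longleftrightarrow> (+) c ` closure HH = UNIV" using Phi_inj by (simp add: inj_image_eq_iff)
  also have "\<dots> \<longleftrightarrow> closure HH = UNIV"
  proof
    assume h: "(+) c ` closure HH = UNIV"
    show "closure HH = UNIV"
    proof (rule set_eqI, rule iffI)
      fix y show "y \<in> closure HH" if "y \<in> UNIV"
      proof -
        have "c + y \<in> (+) c ` closure HH" using h by simp
        then show ?thesis by auto
      qed
    qed simp
  next
    assume "closure HH = UNIV"
    then show "(+) c ` closure HH = UNIV" by (auto intro: image_eqI[of _ _ "x - c" for x])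
  qed
  finally show ?thesis .
qed

end



lemma bil_rows: "bil n x y = (\<Sum>i<23. x i * (\<Sum>l<23. gram n i l * y l))"
  unfolding bil_def by (simp add: sum_distrib_left mult_ac)

lemma bil_lin: "bil n (\<lambda>i. a * x i + b * y i) w = a * bil n x w + b * bil n y w"
  unfolding bil_def by (simp add: algebra_simps sum.distrib sum_distrib_left)

lemma ofintv_lin: "ofintv (\<lambda>i. a * x i + b * y i) = (\<lambda>i. of_int a * ofintv x i + of_int b * ofintv y i)"
  by (simp add: ofintv_def fun_eq_iff)

lemma Re_bilC: "Re (\<mu> * bilC n t (ofintv w)) =
   (\<Sum>i<23. real_of_int (w i) * (\<Sum>l<23. real_of_int (gram n i l) * Re (\<mu> * t l)))"
proof -
  have "bilC n t (ofintv w) = bilC n (ofintv w) t" by (rule bilC_sym)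
  also have "\<dots> = (\<Sum>i<23. \<Sum>l<23. of_int (gram n i l) * of_int (w i) * t l)" unfolding bilC_def ofintv_def ..
  finally have "\<mu> * bilC n t (ofintv w) = (\<Sum>i<23. \<Sum>l<23. of_int (w i) * (of_int (gram n i l) * (\<mu> * t l)))"
    by (simp add: sum_distrib_left mult_ac)
  then show ?thesis by (simp add: sum_distrib_left)
qed

lemma prim_mult:
  assumes prim: "primitive \<alpha>" and i0: "\<alpha> i0 \<noteq> 0"
    and za: "\<And>i. of_int (z i) = a * (of_int (\<alpha> i) :: complex)"
  shows "\<exists>k. z = (\<lambda>i. k * \<alpha> i)"
proof -
  define p where "p = z i0"
  define q where "q = \<alpha> i0"
  have q0: "q \<noteq> 0" using i0 by (simp add: q_def)
  have pq: "q * z i = p * \<alpha> i" for i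
  proof -
    have "of_int (q * z i) = (of_int q * a) * (of_int (\<alpha> i) :: complex)" using za[of i] by simp
    also have "of_int q * a = (of_int p :: complex)" using za[of i0] by (simp add: p_def q_def)
    finally show ?thesis by (metis of_int_eq_iff of_int_mult)
  qed
  define g where "g = gcd p q"
  have g0: "g \<noteq> 0" using q0 by (simp add: g_def)
  then obtain p' q' where pq': "p = p' * g" "q = q' * g" "coprime p' q'"
    using gcd_coprime_exists unfolding g_def by blast
  have pq2: "q' * z i = p' * \<alpha> i" for i
  proof -
    have "(q' * g) * z i = (p' * g) * \<alpha> i" using pq[of i] unfolding pq'(1,2) .
    then have "g * (q' * z i) = g * (p' * \<alpha> i)" by (simp add: mult_ac)
    then show ?thesis using g0 by simp
  qed
  have dv: "q' dvd \<alpha> i" for i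
  proof -
    have "q' dvd p' * \<alpha> i" using pq2[of i] by (metis dvd_triv_left)
    then show ?thesis using pq'(3) by (simp add: coprime_dvd_mult_right_iff coprime_commute)
  qed
  define b where "b i = \<alpha> i div q'" for i
  have ab: "\<alpha> = (\<lambda>i. q' * b i)" using dv by (auto simp: b_def fun_eq_iff)
  have "\<alpha> \<in> Lam" using prim by (simp add: primitive_def)
  then have "b \<in> Lam" by (simp add: Lam_def b_def)
  then have "b \<in> Lam \<and> \<alpha> = (\<lambda>i. q' * b i)" using ab by simp
  then have q1: "q' = 1 \<or> q' = -1" using prim unfolding primitive_def by blast
  have "z = (\<lambda>i. (q' * p') * \<alpha> i)"
  proof
    fix i
    have "q' * (q' * z i) = q' * (p' * \<alpha> i)" using pq2[of i] by simp
    then show "z i = q' * p' * \<alpha> i" using q1 by (elim disjE) simp_all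
  qed
  then show ?thesis by blast
qed

context fibsetup
begin

lemma HH_grp: "sgrp HH"
  unfolding sgrp_def
proof (intro conjI ballI)
  have "(\<lambda>i. 0::int) \<in> Lam" "bil n (\<lambda>i. 0) \<alpha> = 0" "bilC n t (ofintv (\<lambda>i. 0)) = 0"
    by (simp_all add: Lam_def bil_def bilC_def ofintv_def)
  then show "0 \<in> HH" unfolding HH_def by (auto intro!: exI[of _ "\<lambda>i. 0"])
next
  fix x y assume "x \<in> HH" "y \<in> HH"
  then obtain z1 z2 where z: "z1 \<in> Lam" "bil n z1 \<alpha> = 0" "x = bilC n t (ofintv z1)"
      "z2 \<in> Lam" "bil n z2 \<alpha> = 0" "y = bilC n t (ofintv z2)" unfolding HH_def by auto
  have "(\<lambda>i. 1 * z1 i + 1 * z2 i) \<in> Lam" using z by (simp add: Lam_def)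
  moreover have "bil n (\<lambda>i. 1 * z1 i + 1 * z2 i) \<alpha> = 0" using bil_lin[of n 1 z1 1 z2 \<alpha>] z by simp
  moreover have "bilC n t (ofintv (\<lambda>i. 1 * z1 i + 1 * z2 i)) = x + y"
    by (simp only: ofintv_lin bilC_lin2 z) simp
  ultimately have P: "(\<lambda>i. 1 * z1 i + 1 * z2 i) \<in> Lam \<and> bil n (\<lambda>i. 1 * z1 i + 1 * z2 i) \<alpha> = 0 \<and> x + y = bilC n t (ofintv (\<lambda>i. 1 * z1 i + 1 * z2 i))" by simp
  show "x + y \<in> HH" unfolding HH_def mem_Collect_eq
    by (rule exI[of _ "\<lambda>i. 1 * z1 i + 1 * z2 i"]) (use P in simp)
next
  fix x assume "x \<in> HH"
  then obtain z1 where z: "z1 \<in> Lam" "bil n z1 \<alpha> = 0" "x = bilC n t (ofintv z1)" unfolding HH_def by auto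
  have "(\<lambda>i. (-1) * z1 i + 0 * z1 i) \<in> Lam" using z by (simp add: Lam_def)
  moreover have "bil n (\<lambda>i. (-1) * z1 i + 0 * z1 i) \<alpha> = 0" using bil_lin[of n "-1" z1 0 z1 \<alpha>] z by simp
  moreover have "bilC n t (ofintv (\<lambda>i. (-1) * z1 i + 0 * z1 i)) = - x"
    by (simp only: ofintv_lin bilC_lin2 z) simp
  ultimately have P: "(\<lambda>i. (-1) * z1 i + 0 * z1 i) \<in> Lam \<and> bil n (\<lambda>i. (-1) * z1 i + 0 * z1 i) \<alpha> = 0 \<and> - x = bilC n t (ofintv (\<lambda>i. (-1) * z1 i + 0 * z1 i))" by simp
  show "- x \<in> HH" unfolding HH_def mem_Collect_eq
    by (rule exI[of _ "\<lambda>i. (-1) * z1 i + 0 * z1 i"]) (use P in simp)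
qed

lemma bilC_A_int: "bil n z \<alpha> = 0 \<Longrightarrow> bilC n A (ofintv z) = 0"
  using bil_sym[of n \<alpha> z] by (simp add: bilC_ofint)

lemma closure_not_UNIV:
  assumes "\<mu> \<noteq> 0" "\<And>h. h \<in> HH \<Longrightarrow> Re (\<mu> * h) \<in> \<int>"
  shows "closure HH \<noteq> UNIV"
proof -
  have cl: "closed {w. Re (\<mu> * w) \<in> \<int>}"
  proof -
    have "continuous_on UNIV (\<lambda>w. Re (\<mu> * w))" by (intro continuous_intros)
    then show ?thesis using continuous_closed_preimage[OF _ closed_UNIV closed_Ints, of "\<lambda>w. Re (\<mu> * w)"]
      by (simp add: vimage_def)
  qed
  have "closure HH \<subseteq> {w. Re (\<mu> * w) \<in> \<int>}" using assms(2) by (intro closure_minimal cl) auto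
  moreover have "\<mu> * (1 / (2 * \<mu>)) = 1/2" using assms(1) by (simp add: field_simps)
  moreover have "(1/2 :: real) \<notin> \<int>"
  proof
    assume "(1/2::real) \<in> \<int>"
    then obtain k :: int where "1/2 = (of_int k :: real)" by (auto elim: Ints_cases)
    then have "1 = 2 * (of_int k :: real)" by simp
    then have "(1::int) = 2 * k" by linarith
    then show False by presburger
  qed
  ultimately show ?thesis
  proof (intro notI)
    assume sub: "closure HH \<subseteq> {w. Re (\<mu> * w) \<in> \<int>}" and e: "\<mu> * (1 / (2 * \<mu>)) = 1/2"
      and n: "(1/2 :: real) \<notin> \<int>" and c: "closure HH = UNIV"
    have r1: "Re (\<mu> * (1 / (2 * \<mu>))) \<in> \<int>" using sub c by blast
    have r2: "Re (\<mu> * (1 / (2 * \<mu>))) = Re (1/2)" by (simp only: e)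
    have "Re (1/2 :: complex) \<in> \<int>" using r1 unfolding r2 .
    moreover have "Re (1/2 :: complex) = 1/2" by simp
    ultimately show False using n by simp
  qed
qed

lemma special_imp: "special n \<alpha> (plane \<alpha> t) \<Longrightarrow> closure HH \<noteq> UNIV"
proof -
  assume "special n \<alpha> (plane \<alpha> t)"
  then obtain z u v where z: "z \<in> Lam" "bil n z \<alpha> = 0" "z \<notin> range (\<lambda>k::int. (\<lambda>i. k * \<alpha> i))"
      and uv: "u \<in> plane \<alpha> t" "v \<in> plane \<alpha> t" "ofintv z = (\<lambda>i. u i + cnj (v i))"
    unfolding special_def by blast
  obtain a1 b1 where u: "u = (\<lambda>i. a1 * A i + b1 * t i)" using uv(1) unfolding plane_def by auto
  obtain a2 b2 where v: "v = (\<lambda>i. a2 * A i + b2 * t i)" using uv(2) unfolding plane_def by auto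
  have cv: "cnjv v = (\<lambda>i. cnj a2 * A i + cnj b2 * cnjv t i)"
    unfolding v by (simp add: cnjv_def ofintv_def fun_eq_iff)
  have Z: "ofintv z = (\<lambda>i. 1 * u i + 1 * cnjv v i)" using uv(3) by (simp add: cnjv_def)
  have key: "of_int (bil n z w) = b1 * bilC n t (ofintv w) + cnj b2 * cnj (bilC n t (ofintv w))"
    if w: "bil n w \<alpha> = 0" for w
  proof -
    have "of_int (bil n z w) = bilC n (ofintv z) (ofintv w)" by (simp add: bilC_ofint)
    also have "\<dots> = bilC n u (ofintv w) + bilC n (cnjv v) (ofintv w)" unfolding Z bilC_lin1 by simp
    also have "bilC n u (ofintv w) = b1 * bilC n t (ofintv w)"
      unfolding u bilC_lin1 using bilC_A_int[OF w] by simp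
    also have "bilC n (cnjv v) (ofintv w) = cnj b2 * bilC n (cnjv t) (ofintv w)"
      unfolding cv bilC_lin1 using bilC_A_int[OF w] by simp
    also have "bilC n (cnjv t) (ofintv w) = cnj (bilC n t (ofintv w))"
      using bilC_cnj[of n t "ofintv w"] by (simp add: cnjv_ofint)
    finally show ?thesis .
  qed
  show ?thesis
  proof (cases "b1 + b2 = 0")
    case False
    have "Re ((b1 + b2) * h) \<in> \<int>" if "h \<in> HH" for h
    proof -
      obtain w where w: "w \<in> Lam" "bil n w \<alpha> = 0" "h = bilC n t (ofintv w)" using \<open>h \<in> HH\<close> unfolding HH_def by auto
      have "Re (of_int (bil n z w) :: complex) = Re (b1 * h) + Re (cnj b2 * cnj h)" using key[OF w(2)] w(3) by simp
      also have "Re (cnj b2 * cnj h) = Re (b2 * h)" by simp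
      finally have "Re ((b1 + b2) * h) = of_int (bil n z w)" by (simp add: distrib_right)
      then show ?thesis by simp
    qed
    then show ?thesis using closure_not_UNIV False by blast
  next
    case True
    then have b2: "b2 = - b1" using minus_unique[OF True] by simp
    define a where "a = a1 + cnj a2"
    have Z2: "ofintv z = (\<lambda>i. a * A i + b1 * t i - cnj b1 * cnjv t i)"
      using Z unfolding u cv b2 a_def by (simp add: fun_eq_iff algebra_simps)
    have tbtb: "bilC n (cnjv t) (cnjv t) = 0" using bilC_cnj[of n t t] tt by simp
    have tbt: "bilC n (cnjv t) t = T0" using bilC_sym[of n "cnjv t" t] by (simp add: T0_def)
    have e1: "bilC n (ofintv z) (cnjv t) = b1 * T0"
    proof -
      have "ofintv z = (\<lambda>i. 1 * (\<lambda>i. a * A i + b1 * t i) i + (- cnj b1) * cnjv t i)" unfolding Z2 by (simp add: fun_eq_iff)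
      then show ?thesis by (simp only: bilC_lin1) (simp add: bilC_lin1 At' tbtb T0_def)
    qed
    have e2: "bilC n (ofintv z) t = - cnj b1 * T0"
    proof -
      have "ofintv z = (\<lambda>i. 1 * (\<lambda>i. a * A i + b1 * t i) i + (- cnj b1) * cnjv t i)" unfolding Z2 by (simp add: fun_eq_iff)
      then show ?thesis by (simp only: bilC_lin1) (simp add: bilC_lin1 At tt tbt)
    qed
    have "cnj (bilC n (ofintv z) t) = bilC n (ofintv z) (cnjv t)" using bilC_cnj[of n "ofintv z" t] by (simp add: cnjv_ofint)
    then have "- b1 * T0 = b1 * T0" using e1 e2 T0real by simp
    then have "b1 = 0" using T0nz by simp
    then have "ofintv z = (\<lambda>i. a * A i)" using Z2 by simp
    then have "\<And>i. of_int (z i) = a * of_int (\<alpha> i)" by (simp add: ofintv_def fun_eq_iff)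
    moreover have "\<alpha> i0 \<noteq> 0" using i0 by (simp add: ofintv_def)
    ultimately obtain k where "z = (\<lambda>i. k * \<alpha> i)" using prim_mult[OF prim] by blast
    then have False using z(3) by auto
    then show ?thesis ..
  qed
qed

end



lemma Re_ofreal_mult: "Re (of_real r * z) = r * Re z" by simp

lemma sum_zk:
  fixes a b :: "'a::comm_ring_1" and k j :: nat
  assumes "k < 23" "j < 23"
  shows "(\<Sum>i<23. ((if i = k then a else 0) - (if i = j then b else 0)) * X i) = a * X k - b * X j"
proof -
  have "(\<Sum>i<23. ((if i = k then a else 0) - (if i = j then b else 0)) * X i)
      = (\<Sum>i<23. (if i = k then a * X i else 0)) - (\<Sum>i<23. (if i = j then b * X i else 0))"
    unfolding sum_subtractf[symmetric] by (rule sum.cong) (auto simp: algebra_simps)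
  then show ?thesis using assms by simp
qed

context fibsetup
begin

lemma dense_imp: "closure HH \<noteq> UNIV \<Longrightarrow> special n \<alpha> (plane \<alpha> t)"
proof -
  assume "closure HH \<noteq> UNIV"
  then obtain \<mu> where mu: "\<mu> \<noteq> 0" "\<And>h. h \<in> HH \<Longrightarrow> Re (\<mu> * h) \<in> \<int>"
    using denseD[OF HH_grp] by blast
  define r where "r l = Re (\<mu> * t l)" for l
  define m where "m k = (\<Sum>l<23. gram n k l * \<alpha> l)" for k
  define \<phi> where "\<phi> k = (\<Sum>l<23. real_of_int (gram n k l) * r l)" for k
  define D where "D = 2 * (int n - 1)"
  have D0: "D > 0" using n2 unfolding D_def by simp
  have tz: "t l = 0" if "l \<ge> 23" for l using tL that by (simp add: LamC_def)
  have az: "\<alpha> l = 0" if "l \<ge> 23" for l using aL that by (simp add: Lam_def)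
  have rz: "r l = 0" if "l \<ge> 23" for l using tz[OF that] by (simp add: r_def)
  have mex: "\<exists>j<23. m j \<noteq> 0"
  proof (rule ccontr)
    assume "\<not> (\<exists>j<23. m j \<noteq> 0)"
    then have m0: "\<And>k. k < 23 \<Longrightarrow> m k = 0" by auto
    have "\<alpha> i = 0" for i
    proof (cases "i < 23")
      case True
      have "(\<Sum>k<23. of_int (ginvd n i k) * (\<Sum>l<23. of_int (gram n k l) * \<alpha> l)) = of_int (2 * (int n - 1)) * \<alpha> i"
        by (rule ginv_apply[OF True])
      moreover have "(\<Sum>k<23. of_int (ginvd n i k) * (\<Sum>l<23. of_int (gram n k l) * \<alpha> l)) = (0::int)"
        using m0 by (intro sum.neutral) (simp add: m_def)
      ultimately have "D * \<alpha> i = 0" by (simp add: D_def)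
      then show ?thesis using D0 by simp
    next
      case False then show ?thesis using az by simp
    qed
    then show False using a_nz by auto
  qed
  then obtain j where j: "j < 23" "m j \<noteq> 0" by blast
  have kap: "\<exists>c::int. of_int (m j) * \<phi> k - of_int (m k) * \<phi> j = of_int c" if k: "k < 23" for k
  proof -
    define zk where "zk i = (if i = k then m j else 0) - (if i = j then m k else 0)" for i
    have zkL: "zk \<in> Lam" using k j by (simp add: Lam_def zk_def)
    have "bil n zk \<alpha> = (\<Sum>i<23. zk i * m i)" by (simp add: bil_rows m_def)
    also have "\<dots> = m j * m k - m k * m j" unfolding zk_def by (rule sum_zk[OF k j(1)])
    also have "\<dots> = 0" by simp
    finally have zka: "bil n zk \<alpha> = 0" .
    have "bilC n t (ofintv zk) \<in> HH" using zkL zka unfolding HH_def by blast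
    then have "Re (\<mu> * bilC n t (ofintv zk)) \<in> \<int>" using mu(2) by blast
    moreover have "Re (\<mu> * bilC n t (ofintv zk)) = (\<Sum>i<23. real_of_int (zk i) * \<phi> i)"
      unfolding Re_bilC \<phi>_def r_def ..
    moreover have "(\<Sum>i<23. real_of_int (zk i) * \<phi> i) = of_int (m j) * \<phi> k - of_int (m k) * \<phi> j"
    proof -
      have "real_of_int (zk i) = (if i = k then of_int (m j) else 0) - (if i = j then of_int (m k) else 0)" for i
        by (simp add: zk_def)
      then show ?thesis using sum_zk[OF k j(1), of "of_int (m j)" "of_int (m k)" \<phi>] by simp
    qed
    ultimately show ?thesis by (auto elim!: Ints_cases)
  qed
  obtain \<kappa> where kappa: "\<And>k. k < 23 \<Longrightarrow> of_int (m j) * \<phi> k - of_int (m k) * \<phi> j = of_int (\<kappa> k)"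
    using kap by metis
  define s where "s = \<phi> j / of_int (m j)"
  define y where "y l = r l - s * of_int (\<alpha> l)" for l
  have mj0: "real_of_int (m j) \<noteq> 0" using j by simp
  have gy: "(\<Sum>l<23. of_int (gram n k l) * y l) = \<phi> k - s * of_int (m k)" for k
  proof -
    have "(\<Sum>l<23. of_int (gram n k l) * y l) = \<phi> k - s * (\<Sum>l<23. of_int (gram n k l) * of_int (\<alpha> l))"
      unfolding y_def \<phi>_def by (simp add: algebra_simps sum_subtractf sum_distrib_left)
    also have "(\<Sum>l<23. of_int (gram n k l) * of_int (\<alpha> l)) = (of_int (m k) :: real)"
      by (simp add: m_def)
    finally show ?thesis .
  qed
  have Gy: "(\<Sum>l<23. of_int (gram n k l) * y l) = of_int (\<kappa> k) / of_int (m j)" if k: "k < 23" for k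
  proof -
    have "(\<Sum>l<23. of_int (gram n k l) * y l) = \<phi> k - s * of_int (m k)" by (rule gy)
    also have "\<phi> k - s * of_int (m k) = (of_int (m j) * \<phi> k - of_int (m k) * \<phi> j) / of_int (m j)"
      using mj0 by (simp add: s_def field_simps)
    finally show ?thesis using kappa[OF k] by simp
  qed
  define z0 where "z0 i = (\<Sum>k<23. ginvd n i k * \<kappa> k)" for i
  have z0y: "real_of_int (z0 i) = of_int D * of_int (m j) * y i" for i
  proof (cases "i < 23")
    case True
    define S where "S = (\<Sum>k<23. of_int (ginvd n i k) * (\<Sum>l<23. of_int (gram n k l) * y l))"
    have S1: "S = of_int D * y i" unfolding S_def D_def by (rule ginv_apply[OF True])
    have S2: "S = real_of_int (z0 i) / of_int (m j)"
      unfolding S_def by (simp add: Gy z0_def sum_divide_distrib)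
    have "real_of_int (z0 i) = S * of_int (m j)" using S2 mj0 by simp
    then show ?thesis unfolding S1 by (simp add: mult_ac)
  next
    case False
    then have "z0 i = 0" unfolding z0_def by (intro sum.neutral) (simp add: ginvd_def)
    moreover have "y i = 0" using False rz az by (simp add: y_def)
    ultimately show ?thesis by simp
  qed
  have z0L: "z0 \<in> Lam"
  proof -
    have "z0 i = 0" if "i \<ge> 23" for i
    proof -
      have "y i = 0" using that rz az by (simp add: y_def)
      then show ?thesis using z0y[of i] by simp
    qed
    then show ?thesis by (simp add: Lam_def)
  qed
  have z0a: "bil n z0 \<alpha> = 0"
  proof -
    have "real_of_int (bil n z0 \<alpha>) = real_of_int (bil n \<alpha> z0)" by (simp add: bil_sym)
    also have "\<dots> = (\<Sum>i<23. of_int (\<alpha> i) * (\<Sum>l<23. of_int (gram n i l) * (of_int D * of_int (m j) * y l)))"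
      by (simp add: bil_rows z0y[symmetric])
    also have "\<dots> = (\<Sum>i<23. of_int (\<alpha> i) * (of_int D * of_int (m j) * (\<phi> i - s * of_int (m i))))"
    proof (rule sum.cong[OF refl])
      fix i
      have "(\<Sum>l<23. of_int (gram n i l) * (of_int D * of_int (m j) * y l))
          = of_int D * of_int (m j) * (\<Sum>l<23. of_int (gram n i l) * y l)"
        by (simp add: sum_distrib_left mult_ac)
      then show "real_of_int (\<alpha> i) * (\<Sum>l<23. of_int (gram n i l) * (of_int D * of_int (m j) * y l))
          = of_int (\<alpha> i) * (of_int D * of_int (m j) * (\<phi> i - s * of_int (m i)))" by (simp add: gy)
    qed
    also have "\<dots> = of_int D * of_int (m j) * (\<Sum>i<23. of_int (\<alpha> i) * \<phi> i)
                    - of_int D * of_int (m j) * s * (\<Sum>i<23. of_int (\<alpha> i) * of_int (m i))"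
      by (simp add: algebra_simps sum_subtractf sum_distrib_left)
    also have "(\<Sum>i<23. of_int (\<alpha> i) * \<phi> i) = Re (\<mu> * bilC n t A)"
      unfolding Re_bilC \<phi>_def r_def ..
    also have "(\<Sum>i<23. real_of_int (\<alpha> i) * of_int (m i)) = of_int (bil n \<alpha> \<alpha>)"
      by (simp add: bil_rows m_def)
    finally show ?thesis using tA aa by simp
  qed
  define c1 where "c1 = - (of_real (of_int D * of_int (m j) * s) :: complex)"
  define d1 where "d1 = (of_real (of_int D * of_int (m j)) :: complex) * \<mu> / 2"
  define u where "u = (\<lambda>i. c1 * A i + d1 * t i)"
  define v where "v = (\<lambda>i. 0 * A i + d1 * t i)"
  have uW: "u \<in> plane \<alpha> t" unfolding u_def plane_def by blast
  have vW: "v \<in> plane \<alpha> t" unfolding v_def plane_def by blast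
  have zuv: "ofintv z0 = (\<lambda>i. u i + cnj (v i))"
  proof
    fix i
    have "u i + cnj (v i) = c1 * A i + (d1 * t i + cnj (d1 * t i))" by (simp add: u_def v_def)
    also have "d1 * t i + cnj (d1 * t i) = of_real (2 * Re (d1 * t i))" by (rule complex_add_cnj)
    also have "2 * Re (d1 * t i) = of_int D * of_int (m j) * r i"
    proof -
      have "d1 * t i = of_real (of_int D * of_int (m j) / 2) * (\<mu> * t i)" by (simp add: d1_def)
      then have "Re (d1 * t i) = (of_int D * of_int (m j) / 2) * r i" by (simp only: Re_ofreal_mult r_def)
      then show ?thesis by simp
    qed
    finally have uv: "u i + cnj (v i) = of_real (of_int D * of_int (m j) * y i)"
      by (simp add: c1_def y_def ofintv_def algebra_simps)
    have "ofintv z0 i = of_real (real_of_int (z0 i))" by (simp add: ofintv_def)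
    also have "\<dots> = of_real (of_int D * of_int (m j) * y i)" using z0y[of i] by (simp only:)
    finally show "ofintv z0 i = u i + cnj (v i)" unfolding uv .
  qed
  have z0n: "z0 \<notin> range (\<lambda>k::int. (\<lambda>i. k * \<alpha> i))"
  proof
    assume "z0 \<in> range (\<lambda>k::int. (\<lambda>i. k * \<alpha> i))"
    then obtain k where k: "z0 = (\<lambda>i. k * \<alpha> i)" by auto
    define \<rho> where "\<rho> = s + of_int k / (of_int D * of_int (m j))"
    have Dm: "real_of_int D * of_int (m j) \<noteq> 0" using D0 mj0 by simp
    have r\<rho>: "r i = \<rho> * of_int (\<alpha> i)" for i
    proof -
      have "of_int D * of_int (m j) * y i = of_int k * of_int (\<alpha> i)" using z0y[of i] k by simp
      then show ?thesis using Dm by (simp add: y_def \<rho>_def field_simps)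
    qed
    define w where "w = (\<lambda>i. \<mu> * t i)"
    have cw: "cnjv w = (\<lambda>i. of_real (2 * \<rho>) * A i + (-1) * w i)"
    proof
      fix i
      have "w i + cnj (w i) = of_real (2 * r i)" unfolding w_def r_def by (rule complex_add_cnj)
      then show "cnjv w i = of_real (2 * \<rho>) * A i + (-1) * w i"
        by (simp add: cnjv_def r\<rho> ofintv_def algebra_simps)
    qed
    have "bilC n w (cnjv w) = of_real (2 * \<rho>) * bilC n w A + (-1) * bilC n w w"
      unfolding cw by (rule bilC_lin2)
    also have "\<dots> = 0" unfolding w_def by (simp add: bilC_scale1 bilC_scale2 tA tt)
    finally have z: "bilC n w (cnjv w) = 0" .
    have "cnjv w = (\<lambda>i. cnj \<mu> * cnjv t i)" by (simp add: w_def cnjv_def)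
    then have "bilC n w (cnjv w) = \<mu> * cnj \<mu> * T0" unfolding w_def
      by (simp add: bilC_scale1 bilC_scale2 T0_def)
    then show False using z mu(1) T0nz by simp
  qed
  show ?thesis unfolding special_def
    using z0L z0a z0n uW vW zuv by blast
qed

end

theorem lemma5p4:
  fixes n :: nat and \<alpha> :: "nat \<Rightarrow> int" and W :: "(nat \<Rightarrow> complex) set"
  assumes "n \<ge> 2"
    and "\<alpha> \<in> Lam" and "primitive \<alpha>" and "bil n \<alpha> \<alpha> = 0"
    and "W \<in> Omega_Q n \<alpha>"
  shows "(has_dense_orbit n \<alpha> W \<longleftrightarrow> \<not> special n \<alpha> W) \<and>
         (has_dense_orbit n \<alpha> W \<longrightarrow>
            (\<forall>L \<in> fiber n \<alpha> W. dense_in (orbit n \<alpha> L) (fiber n \<alpha> W)))"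
proof -
  obtain t where W: "W = plane \<alpha> t" and t: "t \<in> LamC" "bilC n t (ofintv \<alpha>) = 0"
      "t \<notin> cline (ofintv \<alpha>)" "bilC n t t = 0" "Im (bilC n t (cnjv t)) = 0" "Re (bilC n t (cnjv t)) > 0"
    using assms(5) unfolding Omega_Q_def by blast
  interpret fibsetup n \<alpha> t
    using assms(1-4) t by unfold_locales auto
  have F: "fiber n \<alpha> W = range \<Phi>" using fiber_eq W by simp
  have hd: "has_dense_orbit n \<alpha> W \<longleftrightarrow> closure HH = UNIV"
    unfolding has_dense_orbit_def F using dense_orbit_iff by auto
  have all: "(\<forall>L \<in> fiber n \<alpha> W. dense_in (orbit n \<alpha> L) (fiber n \<alpha> W)) \<longleftrightarrow> closure HH = UNIV"
    unfolding F using dense_orbit_iff by auto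
  have sp: "special n \<alpha> W \<longleftrightarrow> closure HH \<noteq> UNIV" using special_imp dense_imp W by blast
  show ?thesis using hd all sp by blast
qed


end
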